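(* Let $\alpha>1$, $s>0$. Suppose that for every pair of edge-level adjacent datasets $\mathcal{D},\mathcal{D}'$ the DPDGC weights satisfy $D_\alpha((\mathbf{W}^{(A)},\mathbf{b})\,\|\,(\mathbf{W}^{(A)\prime},\mathbf{b}'))\le\gamma_1$. Then the DPDGC model is edge $(\alpha,\gamma_1+\frac{\alpha}{2s^2})$-GDP: for every $v\in[n]\setminus[m]$ and every pair of edge-level adjacent datasets $\mathcal{D},\mathcal{D}'$, $D_\alpha(\mathcal{M}(v;\mathcal{D})\,\|\,\mathcal{M}(v;\mathcal{D}'))\le\gamma_1+\frac{\alpha}{2s^2}$.
   Context: A graph dataset is $\mathcal{D}=(\mathbf{X},\mathbf{Y},\mathbf{A})$ with node set $[n]$, $\mathbf{X}\in\mathbb{R}^{n\times F}$, $\mathbf{Y}\in\{0,1\}^{m\times C}$ (labels of nodes $1,\dots,m$; nodes in $[n]\setminus[m]$ are to be predicted), and $\mathbf{A}\in\{0,1\}^{n\times n}$ the adjacency matrix of a directed graph without self-loops. Edge-level adjacency: same $\mathbf{X},\mathbf{Y}$, adjacency matrices differing in exactly one entry. Rényi divergence of order $\alpha>1$: $D_\alpha(X\|Y)=\frac{1}{\alpha-1}\log\mathbb{E}_{x\sim Q}[(P(x)/Q(x))^\alpha]$. DPDGC model: $(\mathbf{W}^{(A)},\mathbf{b})$ is a random output of a randomized algorithm on the dataset, with every row of $\mathbf{W}^{(A)}\in\mathbb{R}^{n\times h}$ of Euclidean norm $1$ and $\mathbf{b}\in\mathbb{R}^h$; $\mathbf{Z}=\mathbf{A}\mathbf{W}^{(A)}+\mathbf{1}_n\mathbf{b}^\top+\mathbf{N}$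 with $\mathbf{N}$ having i.i.d. $\mathcal{N}(0,s^2)$ entries independent of everything else; $\Theta=\mathcal{B}(\mathbf{X},\mathbf{Y},\mathbf{Z})$ for some randomized algorithm $\mathcal{B}$ whose internal randomness is independent of everything else; the prediction for $v$ is $\widehat{\mathbf{Y}}_v=g(\Theta,\mathbf{X}_v,\mathbf{Z}_v)$ for a fixed deterministic $g$; and $\mathcal{M}(v;\mathcal{D})=(\widehat{\mathbf{Y}}_v,(\mathbf{W}^{(A)},\mathbf{b},\Theta))$. *)

theory Defs
  imports "HOL-Probability.Probability"
begin

definition renyi_div :: "real \<Rightarrow> 'a measure \<Rightarrow> 'a measure \<Rightarrow> ereal" where
  "renyi_div \<alpha> P Q =
    (if sets P = sets Q \<and> absolutely_continuous Q P then
       (let I = (\<integral>\<^sup>+ x. ennreal (enn2real (RN_deriv Q P x) powr \<alpha>) \<partial>Q)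
        in if I = \<top> then \<infinity> else ereal (ln (enn2real I) / (\<alpha> - 1)))
     else \<infinity>)"

text \<open>Graph datasets: features X (n x F), labels Y (only rows of labelled nodes
  are meaningful; other rows are fixed to all-False), adjacency A of a directed
  graph. Nodes are the finite type 'n, labelled nodes the set Lab.\<close>
type_synonym ('n, 'f, 'c) dataset =
  "(real^'f^'n) \<times> ('n \<Rightarrow> 'c \<Rightarrow> bool) \<times> ('n \<Rightarrow> 'n \<Rightarrow> bool)"

definition valid_dataset :: "'n set \<Rightarrow> ('n::finite, 'f::finite, 'c::finite) dataset \<Rightarrow> bool" where
  "valid_dataset Lab D = (case D of (X, Y, A) \<Rightarrow>
     (\<forall>i. \<not> A i i) \<and> (\<forall>i. i \<notin> Lab \<longrightarrow> Y i = (\<lambda>_. False)))"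

definition edge_adjacent ::
  "'n set \<Rightarrow> ('n::finite, 'f::finite, 'c::finite) dataset \<Rightarrow> ('n, 'f, 'c) dataset \<Rightarrow> bool" where
  "edge_adjacent Lab D D' = (case D of (X, Y, A) \<Rightarrow> case D' of (X', Y', A') \<Rightarrow>
     valid_dataset Lab D \<and> valid_dataset Lab D' \<and> X = X' \<and> Y = Y' \<and>
     card {(i, j). A i j \<noteq> A' i j} = 1)"

definition gauss_noise :: "real \<Rightarrow> (real^'h::finite^'n::finite) measure" where
  "gauss_noise s = distr (PiM UNIV (\<lambda>_::'n \<times> 'h. density lborel (normal_density 0 s)))
                         borel (\<lambda>f. \<chi> i k. f (i, k))"

definition dpdgc_Z :: "('n::finite \<Rightarrow> 'n \<Rightarrow> bool) \<Rightarrow> real^'h::finite^'n \<Rightarrow> real^'h \<Rightarrow> real^'h^'n \<Rightarrow> real^'h^'n" where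
  "dpdgc_Z A W b N = (\<chi> i k. (\<Sum>j\<in>UNIV. (if A i j then 1 else 0) * W $ j $ k) + b $ k + N $ i $ k)"

text \<open>The DPDGC mechanism M(v; D) = (prediction for v, (W, b, Theta)).
  Wd: randomized algorithm producing (W, b); B: randomized algorithm (Markov kernel)
  producing Theta from (X, Y, Z); g: deterministic prediction map.\<close>
definition dpdgc_mech ::
  "real \<Rightarrow> (('n::finite, 'f::finite, 'c::finite) dataset \<Rightarrow> ((real^'h::finite^'n) \<times> (real^'h)) measure)
   \<Rightarrow> (real^'f^'n \<Rightarrow> ('n \<Rightarrow> 'c \<Rightarrow> bool) \<Rightarrow> real^'h^'n \<Rightarrow> 'th measure)
   \<Rightarrow> ('th \<Rightarrow> real^'f \<Rightarrow> real^'h \<Rightarrow> 'y) \<Rightarrow> 'th measure \<Rightarrow> 'y measure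
   \<Rightarrow> 'n \<Rightarrow> ('n, 'f, 'c) dataset \<Rightarrow> ('y \<times> (((real^'h^'n) \<times> (real^'h)) \<times> 'th)) measure" where
  "dpdgc_mech s Wd B g MT MY v D = (case D of (X, Y, A) \<Rightarrow>
     Wd D \<bind> (\<lambda>wb. gauss_noise s \<bind> (\<lambda>N.
       let Z = dpdgc_Z A (fst wb) (snd wb) N in
       B X Y Z \<bind> (\<lambda>\<theta>. return (MY \<Otimes>\<^sub>M (borel \<Otimes>\<^sub>M MT)) (g \<theta> (X $ v) (Z $ v), (wb, \<theta>))))))"

end

theory Submission
  imports Defs
begin


lemma young_aux:
  fixes a b \<alpha> :: real
  assumes "\<alpha> > 1" "a \<ge> 0" "b \<ge> 0"
  shows "a * b powr (\<alpha> - 1) \<le> a powr \<alpha> / \<alpha> + b powr \<alpha> * ((\<alpha> - 1) / \<alpha>)"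
proof -
  define q where "q = \<alpha> / (\<alpha> - 1)"
  have q1: "q > 1" using assms unfolding q_def by (simp add: field_simps)
  have pq: "1/\<alpha> + 1/q = 1" using assms unfolding q_def by (simp add: field_simps)
  have Y: "a * b powr (\<alpha> - 1) \<le> a powr \<alpha> / \<alpha> + (b powr (\<alpha> - 1)) powr q / q"
    using Youngs_inequality[OF assms(1) q1 pq assms(2)] by simp
  have e1: "(b powr (\<alpha> - 1)) powr q = b powr \<alpha>"
    using assms unfolding q_def by (simp add: powr_powr)
  have e2: "1 / q = (\<alpha> - 1) / \<alpha>" unfolding q_def by simp
  have "(b powr (\<alpha> - 1)) powr q / q = b powr \<alpha> * ((\<alpha> - 1) / \<alpha>)"
    using e1 e2 by (metis divide_inverse inverse_eq_divide)
  then show ?thesis using Y by simp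
qed

lemma dpi:
  fixes M0 :: "'a measure" and L :: "'a \<Rightarrow> 'b measure" and f :: "'a \<Rightarrow> real"
  assumes a1: "\<alpha> > 1" and M0: "prob_space M0" and L: "L \<in> M0 \<rightarrow>\<^sub>M prob_algebra T"
    and f: "f \<in> borel_measurable M0" "\<And>x. 0 \<le> f x"
    and Pp: "prob_space (bind (density M0 (\<lambda>x. ennreal (f x))) L)"
  shows "sets (bind (density M0 (\<lambda>x. ennreal (f x))) L) = sets (bind M0 L)"
    and "absolutely_continuous (bind M0 L) (bind (density M0 (\<lambda>x. ennreal (f x))) L)"
    and "(\<integral>\<^sup>+ y. ennreal (enn2real (RN_deriv (bind M0 L) (bind (density M0 (\<lambda>x. ennreal (f x))) L) y) powr \<alpha>) \<partial>(bind M0 L))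
         \<le> (\<integral>\<^sup>+ x. ennreal (f x powr \<alpha>) \<partial>M0)"
proof -
  define P where "P = bind (density M0 (\<lambda>x. ennreal (f x))) L"
  define Q where "Q = bind M0 L"
  interpret M0: prob_space M0 by fact
  have ne: "space M0 \<noteq> {}" by (simp add: M0.not_empty)
  have Ls: "L \<in> M0 \<rightarrow>\<^sub>M subprob_algebra T" using L by (rule measurable_prob_algebraD)
  have Ld: "L \<in> density M0 (\<lambda>x. ennreal (f x)) \<rightarrow>\<^sub>M subprob_algebra T"
    using Ls by (simp cong: measurable_cong_sets)
  have Lp: "\<And>x. x \<in> space M0 \<Longrightarrow> prob_space (L x)"
    using measurable_space[OF L] by (simp add: space_prob_algebra)
  have Lsets: "\<And>x. x \<in> space M0 \<Longrightarrow> sets (L x) = sets T"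
    using measurable_space[OF L] by (simp add: space_prob_algebra)
  have sP: "sets P = sets T" unfolding P_def
    by (rule sets_bind_measurable[OF Ld]) (simp add: ne)
  have sQ: "sets Q = sets T" unfolding Q_def
    by (rule sets_bind_measurable[OF Ls]) (simp add: ne)
  show "sets (bind (density M0 (\<lambda>x. ennreal (f x))) L) = sets (bind M0 L)"
    using sP sQ by (simp add: P_def Q_def)
  have Qp: "prob_space Q" unfolding Q_def
    by (rule prob_space_bind'[OF _ L]) (simp add: space_prob_algebra M0)
  interpret Q: prob_space Q by fact
  interpret P: prob_space P using Pp by (simp add: P_def)
  have ac: "absolutely_continuous Q P"
    unfolding absolutely_continuous_def
  proof
    fix A assume A: "A \<in> null_sets Q"
    then have AT: "A \<in> sets T" using sQ by auto
    have "0 = emeasure Q A" using A by auto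
    also have "\<dots> = (\<integral>\<^sup>+x. emeasure (L x) A \<partial>M0)" unfolding Q_def
      by (rule emeasure_bind[OF ne Ls AT])
    finally have "AE x in M0. emeasure (L x) A = 0"
      using nn_integral_0_iff_AE[of "\<lambda>x. emeasure (L x) A" M0] AT
      by (simp add: measurable_emeasure_kernel[OF Ls])
    moreover have Lm[measurable]: "(\<lambda>x. emeasure (L x) A) \<in> borel_measurable M0"
      using measurable_emeasure_kernel[OF Ls AT] .
    moreover have "(\<lambda>x. ennreal (f x) * emeasure (L x) A) \<in> borel_measurable M0"
      using f(1) by measurable
    ultimately have "(\<integral>\<^sup>+x. ennreal (f x) * emeasure (L x) A \<partial>M0) = 0"
      by (subst nn_integral_0_iff_AE) auto
    moreover have "emeasure P A = (\<integral>\<^sup>+x. ennreal (f x) * emeasure (L x) A \<partial>M0)"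
      unfolding P_def
      by (subst emeasure_bind[OF _ Ld AT]) (auto simp: ne nn_integral_density f
             measurable_emeasure_kernel[OF Ls] AT)
    ultimately show "A \<in> null_sets P" using AT sP by auto
  qed
  then show "absolutely_continuous (bind M0 L) (bind (density M0 (\<lambda>x. ennreal (f x))) L)"
    by (simp add: P_def Q_def)
  define g where "g y = enn2real (RN_deriv Q P y)" for y
  have gm[measurable]: "g \<in> borel_measurable Q" unfolding g_def by measurable
  have gm'[measurable]: "g \<in> borel_measurable T" using gm sQ by (simp cong: measurable_cong_sets)
  have g0: "\<And>y. 0 \<le> g y" unfolding g_def by simp
  have fin: "AE y in Q. RN_deriv Q P y \<noteq> \<infinity>"
    by (rule Q.RN_deriv_finite[OF _ ac]) (auto simp: sP sQ P.sigma_finite_measure)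
  have Pd: "P = density Q (\<lambda>y. ennreal (g y))"
  proof -
    have "P = density Q (RN_deriv Q P)"
      using Q.density_RN_deriv[OF ac] sP sQ by simp
    also have "\<dots> = density Q (\<lambda>y. ennreal (g y))"
      by (rule density_cong) (use fin in \<open>auto simp: g_def ennreal_enn2real_if\<close>)
    finally show ?thesis .
  qed
  define F where "F = (\<integral>\<^sup>+ x. ennreal (f x powr \<alpha>) \<partial>M0)"
  define gn where "gn n y = min (g y) (real n)" for n y
  have gnm[measurable]: "gn n \<in> borel_measurable T" for n unfolding gn_def by measurable
  have gn0: "0 \<le> gn n y" for n y using g0 unfolding gn_def by simp
  define G where "G n = (\<integral>\<^sup>+ y. ennreal (gn n y powr \<alpha>) \<partial>Q)" for n
  have Gfin: "G n < \<top>" for n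
  proof -
    have "G n \<le> (\<integral>\<^sup>+ y. ennreal (real n powr \<alpha>) \<partial>Q)" unfolding G_def
      by (intro nn_integral_mono ennreal_leI powr_mono2) (use a1 gn0 in \<open>auto simp: gn_def\<close>)
    also have "\<dots> = ennreal (real n powr \<alpha>)" by (simp add: Q.emeasure_space_1)
    finally show ?thesis by (simp add: top.not_eq_extremum le_less_trans)
  qed
  have Gle: "G n \<le> F" for n
  proof -
    have "G n \<le> (\<integral>\<^sup>+ y. ennreal (g y) * ennreal (gn n y powr (\<alpha> - 1)) \<partial>Q)" unfolding G_def
    proof (intro nn_integral_mono)
      fix y
      show "ennreal (gn n y powr \<alpha>) \<le> ennreal (g y) * ennreal (gn n y powr (\<alpha> - 1))"
      proof (cases "gn n y = 0")
        case True then show ?thesis by simp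
      next
        case False
        then have pos: "gn n y > 0" using gn0[of n y] by simp
        have "gn n y powr \<alpha> = gn n y * gn n y powr (\<alpha> - 1)"
        proof -
          have "gn n y powr (1 + (\<alpha> - 1)) = gn n y powr 1 * gn n y powr (\<alpha> - 1)"
            by (rule powr_add)
          moreover have "gn n y powr 1 = gn n y" using pos by simp
          moreover have "1 + (\<alpha> - 1) = \<alpha>" by simp
          ultimately show ?thesis by simp
        qed
        also have "\<dots> \<le> g y * gn n y powr (\<alpha> - 1)"
          by (intro mult_right_mono) (auto simp: gn_def)
        finally show ?thesis by (simp add: ennreal_mult'[symmetric] g0)
      qed
    qed
    also have "\<dots> = (\<integral>\<^sup>+ y. ennreal (gn n y powr (\<alpha> - 1)) \<partial>P)"
      unfolding Pd by (subst nn_integral_density) (auto simp: sQ cong: measurable_cong_sets)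
    also have "\<dots> = (\<integral>\<^sup>+ x. \<integral>\<^sup>+ y. ennreal (gn n y powr (\<alpha> - 1)) \<partial>L x \<partial>(density M0 (\<lambda>x. ennreal (f x))))"
      unfolding P_def by (rule nn_integral_bind[OF _ Ld]) measurable
    also have "\<dots> = (\<integral>\<^sup>+ x. ennreal (f x) * \<integral>\<^sup>+ y. ennreal (gn n y powr (\<alpha> - 1)) \<partial>L x \<partial>M0)"
      by (subst nn_integral_density) (auto simp: f intro!: nn_integral_measurable_subprob_algebra2[OF _ Ls])
    also have "\<dots> = (\<integral>\<^sup>+ x. \<integral>\<^sup>+ y. ennreal (f x * gn n y powr (\<alpha> - 1)) \<partial>L x \<partial>M0)"
      by (intro nn_integral_cong, subst nn_integral_cmult[symmetric])
         (auto simp: ennreal_mult' f Lsets cong: measurable_cong_sets)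
    also have "\<dots> \<le> (\<integral>\<^sup>+ x. \<integral>\<^sup>+ y. (ennreal (f x powr \<alpha> / \<alpha>) + ennreal ((\<alpha> - 1) / \<alpha>) * ennreal (gn n y powr \<alpha>)) \<partial>L x \<partial>M0)"
    proof (intro nn_integral_mono)
      fix x y
      have "f x * gn n y powr (\<alpha> - 1) \<le> f x powr \<alpha> / \<alpha> + gn n y powr \<alpha> * ((\<alpha> - 1) / \<alpha>)"
        by (rule young_aux[OF a1 f(2) gn0])
      then show "ennreal (f x * gn n y powr (\<alpha> - 1)) \<le> ennreal (f x powr \<alpha> / \<alpha>) + ennreal ((\<alpha> - 1) / \<alpha>) * ennreal (gn n y powr \<alpha>)"
      proof -
        have nn1: "0 \<le> f x powr \<alpha> / \<alpha>" using a1 by simp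
        have nn2: "0 \<le> (\<alpha> - 1) / \<alpha>" using a1 by simp
        have nn3: "0 \<le> gn n y powr \<alpha>" by simp
        have "ennreal (f x powr \<alpha> / \<alpha>) + ennreal ((\<alpha> - 1) / \<alpha>) * ennreal (gn n y powr \<alpha>)
            = ennreal (f x powr \<alpha> / \<alpha> + (\<alpha> - 1) / \<alpha> * gn n y powr \<alpha>)"
          using nn1 nn2 nn3 by (simp only: ennreal_mult[symmetric] ennreal_plus[symmetric] mult_nonneg_nonneg)
        moreover have "f x * gn n y powr (\<alpha> - 1) \<le> f x powr \<alpha> / \<alpha> + (\<alpha> - 1) / \<alpha> * gn n y powr \<alpha>"
          using young_aux[OF a1 f(2) gn0, of x n y] by (simp add: algebra_simps)
        ultimately show ?thesis by (simp only: ennreal_leI)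
      qed
    qed
    also have "\<dots> = (\<integral>\<^sup>+ x. ennreal (f x powr \<alpha> / \<alpha>) + ennreal ((\<alpha> - 1) / \<alpha>) * \<integral>\<^sup>+ y. ennreal (gn n y powr \<alpha>) \<partial>L x \<partial>M0)"
    proof (intro nn_integral_cong)
      fix x assume x: "x \<in> space M0"
      interpret Lx: prob_space "L x" using Lp[OF x] .
      show "(\<integral>\<^sup>+ y. (ennreal (f x powr \<alpha> / \<alpha>) + ennreal ((\<alpha> - 1) / \<alpha>) * ennreal (gn n y powr \<alpha>)) \<partial>L x)
          = ennreal (f x powr \<alpha> / \<alpha>) + ennreal ((\<alpha> - 1) / \<alpha>) * \<integral>\<^sup>+ y. ennreal (gn n y powr \<alpha>) \<partial>L x"
        by (subst nn_integral_add) (auto simp: Lsets[OF x] Lx.emeasure_space_1 nn_integral_cmult cong: measurable_cong_sets)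
    qed
    also have "\<dots> = ennreal (1 / \<alpha>) * F + ennreal ((\<alpha> - 1) / \<alpha>) * (\<integral>\<^sup>+ x. \<integral>\<^sup>+ y. ennreal (gn n y powr \<alpha>) \<partial>L x \<partial>M0)"
    proof -
      have m1: "(\<lambda>x. ennreal (f x powr \<alpha> / \<alpha>)) \<in> borel_measurable M0" using f(1) by measurable
      have m0: "(\<lambda>x. \<integral>\<^sup>+ y. ennreal (gn n y powr \<alpha>) \<partial>L x) \<in> borel_measurable M0"
        by (rule nn_integral_measurable_subprob_algebra2[OF _ Ls]) measurable
      then have m2: "(\<lambda>x. ennreal ((\<alpha> - 1) / \<alpha>) * \<integral>\<^sup>+ y. ennreal (gn n y powr \<alpha>) \<partial>L x) \<in> borel_measurable M0"
        by measurable
      have e1: "(\<integral>\<^sup>+ x. ennreal (f x powr \<alpha> / \<alpha>) \<partial>M0) = ennreal (1 / \<alpha>) * F"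
      proof -
        have "(\<integral>\<^sup>+ x. ennreal (f x powr \<alpha> / \<alpha>) \<partial>M0) = (\<integral>\<^sup>+ x. ennreal (1 / \<alpha>) * ennreal (f x powr \<alpha>) \<partial>M0)"
          using a1 by (intro nn_integral_cong) (simp add: ennreal_mult[symmetric])
        also have "\<dots> = ennreal (1 / \<alpha>) * F" unfolding F_def
          by (rule nn_integral_cmult) (use f(1) in measurable)
        finally show ?thesis .
      qed
      have e2: "(\<integral>\<^sup>+ x. ennreal ((\<alpha> - 1) / \<alpha>) * \<integral>\<^sup>+ y. ennreal (gn n y powr \<alpha>) \<partial>L x \<partial>M0)
          = ennreal ((\<alpha> - 1) / \<alpha>) * (\<integral>\<^sup>+ x. \<integral>\<^sup>+ y. ennreal (gn n y powr \<alpha>) \<partial>L x \<partial>M0)"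
        by (rule nn_integral_cmult[OF m0])
      show ?thesis using nn_integral_add[OF m1 m2] e1 e2 by simp
    qed
    also have "(\<integral>\<^sup>+ x. \<integral>\<^sup>+ y. ennreal (gn n y powr \<alpha>) \<partial>L x \<partial>M0) = G n"
      unfolding G_def Q_def by (rule nn_integral_bind[OF _ Ls, symmetric]) measurable
    finally have ineq: "G n \<le> ennreal (1 / \<alpha>) * F + ennreal ((\<alpha> - 1) / \<alpha>) * G n" .
    show "G n \<le> F"
    proof (cases "F = \<top>")
      case True then show ?thesis by simp
    next
      case False
      obtain a where a: "G n = ennreal a" "a \<ge> 0" using Gfin[of n]
        by (cases "G n") auto
      obtain b where b: "F = ennreal b" "b \<ge> 0" using False
        by (cases F) auto
      have n1: "0 \<le> 1 / \<alpha>" "0 \<le> (\<alpha> - 1) / \<alpha>" using a1 by auto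
      have n2: "0 \<le> 1 / \<alpha> * b" "0 \<le> (\<alpha> - 1) / \<alpha> * a" using n1 a b by (simp_all only: mult_nonneg_nonneg)
      have "ennreal (1 / \<alpha>) * F + ennreal ((\<alpha> - 1) / \<alpha>) * G n = ennreal (1 / \<alpha> * b + (\<alpha> - 1) / \<alpha> * a)"
        unfolding a(1) b(1) ennreal_plus[OF n2, symmetric] ennreal_mult[OF n1(1) b(2), symmetric]
          ennreal_mult[OF n1(2) a(2), symmetric] ..
      then have "ennreal a \<le> ennreal (1 / \<alpha> * b + (\<alpha> - 1) / \<alpha> * a)"
        using ineq a(1) by simp
      then have le: "a \<le> 1 / \<alpha> * b + (\<alpha> - 1) / \<alpha> * a"
        using n2 by (simp only: ennreal_le_iff add_nonneg_nonneg)
      have "\<alpha> * a \<le> \<alpha> * (1 / \<alpha> * b + (\<alpha> - 1) / \<alpha> * a)"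
        using le a1 by (intro mult_left_mono) auto
      also have "\<alpha> * (1 / \<alpha> * b + (\<alpha> - 1) / \<alpha> * a) = b + (\<alpha> - 1) * a"
        using a1 by (simp add: field_simps)
      finally have "a \<le> b" by (simp add: algebra_simps)
      then show ?thesis using a b by (simp add: ennreal_leI)
    qed
  qed
  have lim: "(\<integral>\<^sup>+ y. ennreal (g y powr \<alpha>) \<partial>Q) = (SUP n. G n)"
  proof -
    have inc: "incseq (\<lambda>n y. ennreal (gn n y powr \<alpha>))"
      by (auto simp: incseq_def le_fun_def gn_def intro!: ennreal_leI powr_mono2 g0) (use a1 in auto)
    have "(\<integral>\<^sup>+ y. ennreal (g y powr \<alpha>) \<partial>Q) = (\<integral>\<^sup>+ y. (SUP n. ennreal (gn n y powr \<alpha>)) \<partial>Q)"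
    proof (intro nn_integral_cong)
      fix y
      show "ennreal (g y powr \<alpha>) = (SUP n. ennreal (gn n y powr \<alpha>))"
      proof (rule antisym)
        have "gn (nat \<lceil>g y\<rceil>) y = g y" unfolding gn_def by (simp add: real_nat_ceiling_ge)
        then show "ennreal (g y powr \<alpha>) \<le> (SUP n. ennreal (gn n y powr \<alpha>))"
          by (metis SUP_upper UNIV_I)
        show "(SUP n. ennreal (gn n y powr \<alpha>)) \<le> ennreal (g y powr \<alpha>)"
          by (intro SUP_least ennreal_leI powr_mono2) (use a1 gn0 in \<open>auto simp: gn_def\<close>)
      qed
    qed
    also have "\<dots> = (SUP n. G n)" unfolding G_def
      by (rule nn_integral_monotone_convergence_SUP[OF inc]) (simp add: sQ cong: measurable_cong_sets)
    finally show ?thesis .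
  qed
  show "(\<integral>\<^sup>+ y. ennreal (enn2real (RN_deriv (bind M0 L) (bind (density M0 (\<lambda>x. ennreal (f x))) L) y) powr \<alpha>) \<partial>(bind M0 L))
         \<le> (\<integral>\<^sup>+ x. ennreal (f x powr \<alpha>) \<partial>M0)"
    using lim Gle unfolding P_def[symmetric] Q_def[symmetric] g_def[symmetric] F_def[symmetric]
    by (simp add: SUP_least)
qed



definition rho1 :: "real \<Rightarrow> real \<Rightarrow> real \<Rightarrow> real" where
  "rho1 s c x = exp ((2 * c * x - c\<^sup>2) / (2 * s\<^sup>2))"

abbreviation N1 :: "real \<Rightarrow> real measure" where
  "N1 s \<equiv> density lborel (\<lambda>x. ennreal (normal_density 0 s x))"

lemma rho1_pos: "rho1 s c x > 0" by (simp add: rho1_def)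

lemma rho1_meas[measurable (raw)]:
  assumes [measurable]: "f \<in> borel_measurable M" "g \<in> borel_measurable M"
  shows "(\<lambda>x. rho1 s (f x) (g x)) \<in> borel_measurable M"
  unfolding rho1_def by measurable

lemma normal_shift: "normal_density 0 s (x - c) = normal_density 0 s x * rho1 s c x"
proof -
  have "-(x - c)\<^sup>2 / (2 * s\<^sup>2) = -x\<^sup>2 / (2 * s\<^sup>2) + (2 * c * x - c\<^sup>2) / (2 * s\<^sup>2)"
    by (simp add: power2_eq_square add_divide_distrib[symmetric] diff_divide_distrib[symmetric] algebra_simps)
  then show ?thesis
    unfolding normal_density_def rho1_def by (simp add: mult_exp_exp algebra_simps)
qed

lemma shift1:
  assumes F[measurable]: "F \<in> borel_measurable borel"
  shows "(\<integral>\<^sup>+ x. F (x + c) \<partial>N1 s) = (\<integral>\<^sup>+ x. ennreal (rho1 s c x) * F x \<partial>N1 s)"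
proof -
  have "(\<integral>\<^sup>+ x. F (x + c) \<partial>N1 s) = (\<integral>\<^sup>+ x. ennreal (normal_density 0 s x) * F (x + c) \<partial>lborel)"
    by (subst nn_integral_density) auto
  also have "\<dots> = (\<integral>\<^sup>+ x. ennreal (normal_density 0 s ((c + x) - c)) * F (c + x) \<partial>lborel)"
    by (simp add: add.commute)
  also have "\<dots> = (\<integral>\<^sup>+ y. ennreal (normal_density 0 s (y - c)) * F y \<partial>distr lborel borel ((+) c))"
    by (subst nn_integral_distr) auto
  also have "\<dots> = (\<integral>\<^sup>+ y. ennreal (normal_density 0 s (y - c)) * F y \<partial>lborel)"
    by (simp add: lborel_distr_plus)
  also have "\<dots> = (\<integral>\<^sup>+ y. ennreal (normal_density 0 s y) * (ennreal (rho1 s c y) * F y) \<partial>lborel)"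
    by (intro nn_integral_cong) (simp add: normal_shift ennreal_mult' mult.assoc rho1_pos less_imp_le)
  also have "\<dots> = (\<integral>\<^sup>+ x. ennreal (rho1 s c x) * F x \<partial>N1 s)"
    by (subst nn_integral_density) auto
  finally show ?thesis .
qed

lemma rho1_powr: "rho1 s c x powr a = rho1 s (a * c) x * exp (a * (a - 1) * c\<^sup>2 / (2 * s\<^sup>2))"
proof -
  have "a * ((2 * c * x - c\<^sup>2) / (2 * s\<^sup>2)) = (2 * (a * c) * x - (a * c)\<^sup>2) / (2 * s\<^sup>2) + a * (a - 1) * c\<^sup>2 / (2 * s\<^sup>2)"
    by (simp add: power2_eq_square add_divide_distrib[symmetric] diff_divide_distrib[symmetric] algebra_simps)
  then show ?thesis unfolding rho1_def by (simp add: powr_def exp_add[symmetric])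
qed

lemma rho1_moment:
  assumes "s > 0" shows "(\<integral>\<^sup>+ x. ennreal (rho1 s c x powr a) \<partial>N1 s) = ennreal (exp (a * (a - 1) * c\<^sup>2 / (2 * s\<^sup>2)))"
proof -
  interpret prob_space "N1 s" using prob_space_normal_density[OF assms] by simp
  have "(\<integral>\<^sup>+ x. ennreal (rho1 s c x powr a) \<partial>N1 s)
      = (\<integral>\<^sup>+ x. ennreal (exp (a * (a - 1) * c\<^sup>2 / (2 * s\<^sup>2))) * (ennreal (rho1 s (a * c) x) * 1) \<partial>N1 s)"
    by (intro nn_integral_cong) (simp add: rho1_powr ennreal_mult' rho1_pos less_imp_le mult.commute)
  also have "\<dots> = ennreal (exp (a * (a - 1) * c\<^sup>2 / (2 * s\<^sup>2))) * (\<integral>\<^sup>+ x. ennreal (rho1 s (a * c) x) * 1 \<partial>N1 s)"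
    by (rule nn_integral_cmult) measurable
  also have "(\<integral>\<^sup>+ x. ennreal (rho1 s (a * c) x) * 1 \<partial>N1 s) = (\<integral>\<^sup>+ x. 1 \<partial>N1 s)"
    using shift1[where F="\<lambda>_. 1" and c="a * c" and s=s] by simp
  also have "\<dots> = 1" using emeasure_space_1 by simp
  finally show ?thesis by simp
qed

lemma shift1_distr:
  assumes "s > 0"
  shows "distr (N1 s) borel (\<lambda>x. x + c) = density (N1 s) (\<lambda>x. ennreal (rho1 s c x))"
proof (rule measure_eqI)
  show "sets (distr (N1 s) borel (\<lambda>x. x + c)) = sets (density (N1 s) (\<lambda>x. ennreal (rho1 s c x)))" by simp
next
  fix A assume "A \<in> sets (distr (N1 s) borel (\<lambda>x. x + c))"
  then have A[measurable]: "A \<in> sets borel" by simp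
  have pm: "(\<lambda>x. x + c) -` A \<inter> space (N1 s) \<in> sets (N1 s)" by measurable
  have "emeasure (distr (N1 s) borel (\<lambda>x. x + c)) A = emeasure (N1 s) ((\<lambda>x. x + c) -` A \<inter> space (N1 s))"
    by (rule emeasure_distr) auto
  also have "\<dots> = (\<integral>\<^sup>+ x. indicator ((\<lambda>x. x + c) -` A \<inter> space (N1 s)) x \<partial>N1 s)"
    by (rule nn_integral_indicator[OF pm, symmetric])
  also have "\<dots> = (\<integral>\<^sup>+ x. indicator A (x + c) \<partial>N1 s)"
    by (intro nn_integral_cong) (simp add: indicator_def)
  also have "\<dots> = (\<integral>\<^sup>+ x. ennreal (rho1 s c x) * indicator A x \<partial>N1 s)"
    by (rule shift1) measurable
  also have "\<dots> = emeasure (density (N1 s) (\<lambda>x. ennreal (rho1 s c x))) A"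
    by (subst emeasure_density) (auto intro!: nn_integral_cong simp: mult.commute)
  finally show "emeasure (distr (N1 s) borel (\<lambda>x. x + c)) A = emeasure (density (N1 s) (\<lambda>x. ennreal (rho1 s c x))) A" .
qed

definition PiN :: "real \<Rightarrow> ('p::finite \<Rightarrow> real) measure" where
  "PiN s = PiM UNIV (\<lambda>_. N1 s)"

definition rho :: "real \<Rightarrow> ('p::finite \<Rightarrow> real) \<Rightarrow> ('p \<Rightarrow> real) \<Rightarrow> real" where
  "rho s c y = (\<Prod>p\<in>UNIV. rho1 s (c p) (y p))"

lemma rho_pos: "rho s c y > 0" unfolding rho_def by (simp add: rho1_pos prod_pos)

lemma rho_meas[measurable (raw)]:
  assumes [measurable]: "\<And>p. (\<lambda>x. f x p) \<in> borel_measurable M" "\<And>p. (\<lambda>x. g x p) \<in> borel_measurable M"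
  shows "(\<lambda>x. rho s (f x) (g x)) \<in> borel_measurable M"
  unfolding rho_def by measurable

lemma sets_PiN[simp, measurable_cong]: "sets (PiN s) = sets (PiM UNIV (\<lambda>_::'p::finite. borel))"
  unfolding PiN_def by (intro sets_PiM_cong) auto

lemma prob_space_PiN: assumes "s > 0" shows "prob_space (PiN s :: ('p::finite \<Rightarrow> real) measure)"
proof -
  interpret product_prob_space "\<lambda>_::'p. N1 s"
    by (rule product_prob_spaceI) (use prob_space_normal_density[OF assms] in simp)
  show ?thesis unfolding PiN_def by (rule prob_space_PiM) (use prob_space_normal_density[OF assms] in simp)
qed

lemma shift_meas: "(\<lambda>y p. y p + c p) \<in> PiN s \<rightarrow>\<^sub>M (PiN s :: ('p::finite \<Rightarrow> real) measure)"
proof -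
  have "(\<lambda>y p. y p + c p) \<in> PiM UNIV (\<lambda>_::'p. borel) \<rightarrow>\<^sub>M PiM UNIV (\<lambda>_::'p. (borel :: real measure))"
    by (rule measurable_PiM_single') (auto simp: space_PiM)
  then show ?thesis by (subst measurable_cong_sets[OF sets_PiN sets_PiN])
qed

lemma shiftP_distr:
  fixes c :: "'p::finite \<Rightarrow> real"
  assumes s: "s > 0"
  shows "distr (PiN s) (PiN s) (\<lambda>y p. y p + c p) = density (PiN s) (\<lambda>y. ennreal (rho s c y :: real))"
    (is "?D = ?E")
proof -
  define M' where "M' p = density (N1 s) (\<lambda>x. ennreal (rho1 s (c p) x))" for p :: 'p
  have Mp: "prob_space (M' p)" for p
    unfolding M'_def using shift1_distr[OF s, of "c p", symmetric] prob_space_normal_density[OF s]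
    by (simp add: prob_space.prob_space_distr)
  interpret P: product_prob_space M'
    by (rule product_prob_spaceI) (rule Mp)
  interpret N: product_prob_space "\<lambda>_::'p. N1 s"
    by (rule product_prob_spaceI) (use prob_space_normal_density[OF s] in simp)
  have sM': "sets (M' p) = sets borel" for p unfolding M'_def by simp
  have sPi: "sets (PiM UNIV M') = sets (PiN s)"
    unfolding PiN_def by (intro sets_PiM_cong) (auto simp: sM')
  have "?D = PiM UNIV M'"
  proof (rule P.PiM_eqI)
    show "sets ?D = sets (PiM UNIV M')" using sPi by simp
  next
    fix A assume A: "\<And>i. i \<in> UNIV \<Longrightarrow> A i \<in> sets (M' i)"
    then have A'[measurable]: "A i \<in> sets borel" for i using sM' by auto
    have PiEm: "PiE UNIV A \<in> sets (PiN s)" unfolding PiN_def by (auto intro!: sets_PiM_I_finite)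
    have "emeasure ?D (PiE UNIV A) = emeasure (PiN s) ((\<lambda>y p. y p + c p) -` PiE UNIV A \<inter> space (PiN s))"
      by (rule emeasure_distr[OF shift_meas PiEm])
    also have "(\<lambda>y p. y p + c p) -` PiE UNIV A \<inter> space (PiN s) = PiE UNIV (\<lambda>p. (\<lambda>x. x + c p) -` A p)"
      by (auto simp: PiN_def space_PiM PiE_def Pi_def)
    also have "emeasure (PiN s) \<dots> = (\<Prod>p\<in>UNIV. emeasure (N1 s) ((\<lambda>x. x + c p) -` A p))"
    proof -
      have "(\<lambda>x. x + c i) -` A i \<in> sets borel" for i
        using measurable_sets[of "\<lambda>x. x + c i" borel borel "A i"] by (simp add: A')
      then show ?thesis unfolding PiN_def by (subst N.emeasure_PiM) auto
    qed
    also have "\<dots> = (\<Prod>p\<in>UNIV. emeasure (M' p) (A p))"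
      unfolding M'_def shift1_distr[OF s, symmetric]
      by (intro prod.cong refl) (subst emeasure_distr, auto)
    finally show "emeasure ?D (PiE UNIV A) = (\<Prod>p\<in>UNIV. emeasure (M' p) (A p))" .
  qed simp
  moreover have "?E = PiM UNIV M'"
  proof (rule P.PiM_eqI)
    show "sets ?E = sets (PiM UNIV M')" using sPi by simp
  next
    fix A assume A: "\<And>i. i \<in> UNIV \<Longrightarrow> A i \<in> sets (M' i)"
    then have A'[measurable]: "A i \<in> sets borel" for i using sM' by auto
    have PiEm: "PiE UNIV A \<in> sets (PiN s)" unfolding PiN_def by (auto intro!: sets_PiM_I_finite)
    have "emeasure ?E (PiE UNIV A) = (\<integral>\<^sup>+ y. ennreal (rho s c y) * indicator (PiE UNIV A) y \<partial>PiN s)"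
      by (subst emeasure_density) (auto simp: PiEm intro!: nn_integral_cong simp: mult.commute)
    also have "\<dots> = (\<integral>\<^sup>+ y. (\<Prod>p\<in>UNIV. ennreal (rho1 s (c p) (y p)) * indicator (A p) (y p)) \<partial>PiN s)"
    proof (intro nn_integral_cong)
      fix y :: "'p \<Rightarrow> real"
      have "ennreal (rho s c y) = (\<Prod>p\<in>UNIV. ennreal (rho1 s (c p) (y p)))"
        unfolding rho_def by (subst prod_ennreal) (auto simp: rho1_pos less_imp_le)
      moreover have "(indicator (PiE UNIV A) y :: ennreal) = (\<Prod>p\<in>UNIV. indicator (A p) (y p))"
        by (auto simp: indicator_def PiE_def Pi_def)
      ultimately show "ennreal (rho s c y) * indicator (PiE UNIV A) y = (\<Prod>p\<in>UNIV. ennreal (rho1 s (c p) (y p)) * indicator (A p) (y p))"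
        by (simp add: prod.distrib)
    qed
    also have "\<dots> = (\<Prod>p\<in>UNIV. \<integral>\<^sup>+ x. ennreal (rho1 s (c p) x) * indicator (A p) x \<partial>N1 s)"
      unfolding PiN_def by (rule N.product_nn_integral_prod) auto
    also have "\<dots> = (\<Prod>p\<in>UNIV. emeasure (M' p) (A p))"
      unfolding M'_def by (intro prod.cong refl) (subst emeasure_density, auto intro!: nn_integral_cong simp: mult.commute)
    finally show "emeasure ?E (PiE UNIV A) = (\<Prod>p\<in>UNIV. emeasure (M' p) (A p))" .
  qed simp
  ultimately show ?thesis by simp
qed

lemma shiftP:
  assumes s: "s > 0" and F[measurable]: "F \<in> borel_measurable (PiN s)"
  shows "(\<integral>\<^sup>+ y. F (\<lambda>p. y p + c p) \<partial>PiN s) = (\<integral>\<^sup>+ y. ennreal (rho s c y) * F (y :: 'p::finite \<Rightarrow> real) \<partial>PiN s)"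
proof -
  have m: "(\<lambda>y p. y p + c p) \<in> PiN s \<rightarrow>\<^sub>M PiN s" by (rule shift_meas)
  have "(\<integral>\<^sup>+ y. F (\<lambda>p. y p + c p) \<partial>PiN s) = (\<integral>\<^sup>+ y. F y \<partial>distr (PiN s) (PiN s) (\<lambda>y p. y p + c p))"
    by (subst nn_integral_distr[OF m]) auto
  also have "\<dots> = (\<integral>\<^sup>+ y. ennreal (rho s c y) * F y \<partial>PiN s)"
    unfolding shiftP_distr[OF s] by (rule nn_integral_density) auto
  finally show ?thesis .
qed

lemma rho_moment:
  assumes s: "s > 0"
  shows "(\<integral>\<^sup>+ y. ennreal (rho s c y powr a) \<partial>PiN s)
       = ennreal (exp (a * (a - 1) * (\<Sum>p\<in>UNIV. (c p)\<^sup>2) / (2 * s\<^sup>2)))"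
proof -
  interpret N: product_prob_space "\<lambda>_::'p::finite. N1 s"
    by (rule product_prob_spaceI) (use prob_space_normal_density[OF s] in simp)
  have "(\<integral>\<^sup>+ y. ennreal (rho s c y powr a) \<partial>PiN s) = (\<integral>\<^sup>+ y. (\<Prod>p\<in>UNIV. ennreal (rho1 s (c p) (y p) powr a)) \<partial>PiN s)"
    unfolding rho_def
    by (intro nn_integral_cong) (simp add: prod_powr_distrib rho1_pos less_imp_le prod_ennreal)
  also have "\<dots> = (\<Prod>p\<in>UNIV. \<integral>\<^sup>+ x. ennreal (rho1 s (c p) x powr a) \<partial>N1 s)"
    unfolding PiN_def by (rule N.product_nn_integral_prod) auto
  also have "\<dots> = (\<Prod>p\<in>UNIV. ennreal (exp (a * (a - 1) * (c p)\<^sup>2 / (2 * s\<^sup>2))))"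
    by (simp add: rho1_moment[OF s])
  also have "\<dots> = ennreal (\<Prod>p\<in>UNIV. exp (a * (a - 1) * (c p)\<^sup>2 / (2 * s\<^sup>2)))"
    by (simp add: prod_ennreal)
  also have "(\<Prod>p\<in>UNIV. exp (a * (a - 1) * (c p)\<^sup>2 / (2 * s\<^sup>2))) = exp (\<Sum>p\<in>UNIV. a * (a - 1) * (c p)\<^sup>2 / (2 * s\<^sup>2))"
    by (simp add: exp_sum)
  also have "(\<Sum>p\<in>UNIV. a * (a - 1) * (c p)\<^sup>2 / (2 * s\<^sup>2)) = a * (a - 1) * (\<Sum>p\<in>UNIV. (c p)\<^sup>2) / (2 * s\<^sup>2)"
    by (simp add: sum_divide_distrib sum_distrib_left)
  finally show ?thesis .
qed



lemma vec_nth_meas[measurable]: "(\<lambda>x::'a::topological_space^'n::finite. x $ i) \<in> borel_measurable borel"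
  by (intro borel_measurable_continuous_onI continuous_on_component continuous_on_id)

lemma vec1_meas:
  assumes "\<And>k. (\<lambda>x. f x $ k) \<in> borel_measurable M"
  shows "(f :: _ \<Rightarrow> real^'h::finite) \<in> borel_measurable M"
  by (subst borel_measurable_euclidean_space) (auto simp: Basis_vec_def inner_axis assms)

lemma vec2_meas:
  assumes "\<And>i k. (\<lambda>x. f x $ i $ k) \<in> borel_measurable M"
  shows "(f :: _ \<Rightarrow> real^'h::finite^'n::finite) \<in> borel_measurable M"
  by (subst borel_measurable_euclidean_space) (auto simp: Basis_vec_def inner_axis assms)

definition toM :: "('n::finite \<times> 'h::finite \<Rightarrow> real) \<Rightarrow> real^'h^'n" where
  "toM y = (\<chi> i k. y (i, k))"

lemma toM_meas[measurable]: "toM \<in> PiN s \<rightarrow>\<^sub>M borel"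
  unfolding toM_def by (rule vec2_meas) (simp add: measurable_cong_sets[OF sets_PiN refl])

lemma dpdgc_Z_meas[measurable]:
  "(\<lambda>(wb, y). dpdgc_Z A (fst wb) (snd wb) (toM y)) \<in> (borel :: ((real^'h::finite^'n::finite) \<times> (real^'h)) measure) \<Otimes>\<^sub>M PiN s \<rightarrow>\<^sub>M borel"
  unfolding dpdgc_Z_def toM_def
  apply (rule vec2_meas)
  apply (subst measurable_cong_sets[OF sets_pair_measure_cong[OF arg_cong[where f=sets, OF borel_prod[symmetric]] sets_PiN] refl])
  apply (simp add: split_beta')
  apply measurable
  done



lemma kernel_meas:
  fixes B :: "real^'f::finite^'n::finite \<Rightarrow> ('n \<Rightarrow> 'c::finite \<Rightarrow> bool) \<Rightarrow> real^'h::finite^'n \<Rightarrow> 'th measure"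
    and g :: "'th \<Rightarrow> real^'f \<Rightarrow> real^'h \<Rightarrow> 'y"
  assumes B_kernel: "\<And>X Y. B X Y \<in> borel \<rightarrow>\<^sub>M prob_algebra MT"
    and g_meas: "(\<lambda>(\<theta>, x, z). g \<theta> x z) \<in> MT \<Otimes>\<^sub>M borel \<Otimes>\<^sub>M borel \<rightarrow>\<^sub>M MY"
  shows "(\<lambda>x. B X Y (snd x) \<bind> (\<lambda>\<theta>. return (MY \<Otimes>\<^sub>M (borel \<Otimes>\<^sub>M MT)) (g \<theta> (X $ v) (snd x $ v), (fst x, \<theta>))))
     \<in> ((borel :: ((real^'h^'n) \<times> (real^'h)) measure) \<Otimes>\<^sub>M (borel :: (real^'h^'n) measure)) \<rightarrow>\<^sub>M prob_algebra (MY \<Otimes>\<^sub>M (borel \<Otimes>\<^sub>M MT))"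
proof (rule measurable_bind_prob_space2)
  show "(\<lambda>x. B X Y (snd x)) \<in> (borel \<Otimes>\<^sub>M borel) \<rightarrow>\<^sub>M prob_algebra MT"
    by (rule measurable_compose[OF measurable_snd B_kernel])
  have c0: "(\<lambda>p. (snd p, X $ v, snd (fst p) $ v))
      \<in> ((borel :: ((real^'h^'n) \<times> (real^'h)) measure) \<Otimes>\<^sub>M (borel :: (real^'h^'n) measure)) \<Otimes>\<^sub>M MT \<rightarrow>\<^sub>M MT \<Otimes>\<^sub>M borel \<Otimes>\<^sub>M borel"
    by measurable
  have c1: "(\<lambda>p. g (snd p) (X $ v) (snd (fst p) $ v))
      \<in> ((borel :: ((real^'h^'n) \<times> (real^'h)) measure) \<Otimes>\<^sub>M (borel :: (real^'h^'n) measure)) \<Otimes>\<^sub>M MT \<rightarrow>\<^sub>M MY"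
    using measurable_compose[OF c0 g_meas] by simp
  have c2: "(\<lambda>p. (fst (fst p), snd p))
      \<in> ((borel :: ((real^'h^'n) \<times> (real^'h)) measure) \<Otimes>\<^sub>M (borel :: (real^'h^'n) measure)) \<Otimes>\<^sub>M MT \<rightarrow>\<^sub>M borel \<Otimes>\<^sub>M MT"
    by measurable
  have t: "(\<lambda>p. (g (snd p) (X $ v) (snd (fst p) $ v), (fst (fst p), snd p)))
      \<in> ((borel :: ((real^'h^'n) \<times> (real^'h)) measure) \<Otimes>\<^sub>M (borel :: (real^'h^'n) measure)) \<Otimes>\<^sub>M MT \<rightarrow>\<^sub>M MY \<Otimes>\<^sub>M (borel \<Otimes>\<^sub>M MT)"
    by (rule measurable_Pair[OF c1 c2])
  show "(\<lambda>(x, \<theta>). return (MY \<Otimes>\<^sub>M (borel \<Otimes>\<^sub>M MT)) (g \<theta> (X $ v) (snd x $ v), (fst x, \<theta>)))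
      \<in> ((borel :: ((real^'h^'n) \<times> (real^'h)) measure) \<Otimes>\<^sub>M (borel :: (real^'h^'n) measure)) \<Otimes>\<^sub>M MT \<rightarrow>\<^sub>M prob_algebra (MY \<Otimes>\<^sub>M (borel \<Otimes>\<^sub>M MT))"
    using measurable_compose[OF t measurable_return_prob_space] by (simp add: split_beta')
qed

definition cc :: "('n::finite \<Rightarrow> 'n \<Rightarrow> bool) \<Rightarrow> ('n \<Rightarrow> 'n \<Rightarrow> bool) \<Rightarrow> 'n \<Rightarrow> 'n \<Rightarrow> real^'h::finite^'n \<Rightarrow> 'n \<times> 'h \<Rightarrow> real" where
  "cc A A' i0 j0 W p = (if fst p = i0 then ((if A i0 j0 then 1 else 0) - (if A' i0 j0 then 1 else 0)) * W $ j0 $ snd p else 0)"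

lemma Zshift:
  assumes "\<And>i j. (i, j) \<noteq> (i0, j0) \<Longrightarrow> A i j = A' i j"
  shows "dpdgc_Z A W b (toM y) = dpdgc_Z A' W b (toM (\<lambda>p. y p + cc A A' i0 j0 W p))"
proof -
  have "(\<Sum>j\<in>UNIV. (if A i j then 1 else 0) * W $ j $ k) =
        (\<Sum>j\<in>UNIV. (if A' i j then 1 else 0) * W $ j $ k) + cc A A' i0 j0 W (i, k)" for i k
  proof -
    have "(\<Sum>j\<in>UNIV. (if A i j then 1 else 0) * W $ j $ k) =
          (\<Sum>j\<in>UNIV. (if A' i j then 1 else 0) * W $ j $ k + (if j = j0 then cc A A' i0 j0 W (i, k) else 0))"
      by (intro sum.cong refl) (use assms in \<open>auto simp: cc_def\<close>)
    also have "\<dots> = (\<Sum>j\<in>UNIV. (if A' i j then 1 else 0) * W $ j $ k) + cc A A' i0 j0 W (i, k)"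
      by (simp add: sum.distrib)
    finally show ?thesis .
  qed
  then show ?thesis unfolding dpdgc_Z_def toM_def by (simp add: vec_eq_iff)
qed

lemma cc_sum:
  assumes "A i0 j0 \<noteq> A' i0 j0"
  shows "(\<Sum>p\<in>UNIV. (cc A A' i0 j0 W p)\<^sup>2) = (\<Sum>k\<in>UNIV. (W $ j0 $ k)\<^sup>2)"
proof -
  have "(\<Sum>p\<in>UNIV. (cc A A' i0 j0 W p)\<^sup>2) = (\<Sum>p\<in>UNIV \<times> UNIV. (cc A A' i0 j0 W p)\<^sup>2)"
    by (simp add: UNIV_Times_UNIV)
  also have "\<dots> = (\<Sum>i\<in>UNIV. \<Sum>k\<in>UNIV. (cc A A' i0 j0 W (i, k))\<^sup>2)"
    by (simp add: sum.cartesian_product case_prod_unfold)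
  also have "\<dots> = (\<Sum>i\<in>UNIV. if i = i0 then (\<Sum>k\<in>UNIV. (W $ j0 $ k)\<^sup>2) else 0)"
    by (intro sum.cong refl) (use assms in \<open>auto simp: cc_def power2_eq_square\<close>)
  also have "\<dots> = (\<Sum>k\<in>UNIV. (W $ j0 $ k)\<^sup>2)" by simp
  finally show ?thesis .
qed

lemma norm1_sum: "norm (x :: real^'h::finite) = 1 \<Longrightarrow> (\<Sum>k\<in>UNIV. (x $ k)\<^sup>2) = 1"
  by (simp add: norm_vec_def L2_set_def)

lemma Z_meas[measurable]: "(\<lambda>N. dpdgc_Z A W b N) \<in> (borel :: (real^'h::finite^'n::finite) measure) \<rightarrow>\<^sub>M borel"
  unfolding dpdgc_Z_def apply (rule vec2_meas) apply simp apply measurable done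

lemma gauss_PiN: "gauss_noise s = distr (PiN s) borel toM"
  unfolding gauss_noise_def PiN_def toM_def by simp

definition KK :: "(real^'f::finite^'n::finite \<Rightarrow> ('n \<Rightarrow> 'c \<Rightarrow> bool) \<Rightarrow> real^'h::finite^'n \<Rightarrow> 'th measure)
   \<Rightarrow> ('th \<Rightarrow> real^'f \<Rightarrow> real^'h \<Rightarrow> 'y) \<Rightarrow> 'th measure \<Rightarrow> 'y measure \<Rightarrow> real^'f^'n \<Rightarrow> ('n \<Rightarrow> 'c \<Rightarrow> bool) \<Rightarrow> 'n
   \<Rightarrow> ((real^'h^'n) \<times> (real^'h)) \<times> (real^'h^'n) \<Rightarrow> ('y \<times> (((real^'h^'n) \<times> (real^'h)) \<times> 'th)) measure" where
  "KK B g MT MY X Y v = (\<lambda>x. B X Y (snd x) \<bind> (\<lambda>\<theta>. return (MY \<Otimes>\<^sub>M (borel \<Otimes>\<^sub>M MT)) (g \<theta> (X $ v) (snd x $ v), (fst x, \<theta>))))"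

lemma KK_meas:
  assumes B_kernel: "\<And>X Y. B X Y \<in> borel \<rightarrow>\<^sub>M prob_algebra MT"
    and g_meas: "(\<lambda>(\<theta>, x, z). g \<theta> x z) \<in> MT \<Otimes>\<^sub>M borel \<Otimes>\<^sub>M borel \<rightarrow>\<^sub>M MY"
  shows "KK B g MT MY X Y v \<in> (borel \<Otimes>\<^sub>M borel) \<rightarrow>\<^sub>M prob_algebra (MY \<Otimes>\<^sub>M (borel \<Otimes>\<^sub>M MT))"
  unfolding KK_def by (rule kernel_meas[OF B_kernel g_meas])

lemma mech_eq:
  fixes B :: "real^'f::finite^'n::finite \<Rightarrow> ('n \<Rightarrow> 'c::finite \<Rightarrow> bool) \<Rightarrow> real^'h::finite^'n \<Rightarrow> 'th measure"
    and g :: "'th \<Rightarrow> real^'f \<Rightarrow> real^'h \<Rightarrow> 'y"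
  assumes B_kernel: "\<And>X Y. B X Y \<in> borel \<rightarrow>\<^sub>M prob_algebra MT"
    and g_meas: "(\<lambda>(\<theta>, x, z). g \<theta> x z) \<in> MT \<Otimes>\<^sub>M borel \<Otimes>\<^sub>M borel \<rightarrow>\<^sub>M MY"
    and s: "s > 0"
  shows "dpdgc_mech s Wd B g MT MY v (X, Y, A) =
    Wd (X, Y, A) \<bind> (\<lambda>wb. PiN s \<bind> (\<lambda>y. KK B g MT MY X Y v (wb, dpdgc_Z A (fst wb) (snd wb) (toM y))))"
proof -
  interpret PN: prob_space "PiN s :: ('n::finite \<times> 'h::finite \<Rightarrow> real) measure" by (rule prob_space_PiN[OF s])
  have "gauss_noise s \<bind> (\<lambda>N. KK B g MT MY X Y v (wb, dpdgc_Z A (fst wb) (snd wb) N))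
      = PiN s \<bind> (\<lambda>y. KK B g MT MY X Y v (wb, dpdgc_Z A (fst wb) (snd wb) (toM y)))" for wb
  proof -
    have m: "(\<lambda>N. (wb, dpdgc_Z A (fst wb) (snd wb) N)) \<in> (borel :: (real^'h^'n) measure) \<rightarrow>\<^sub>M borel \<Otimes>\<^sub>M borel"
      by (rule measurable_Pair) auto
    have k: "(\<lambda>N. KK B g MT MY X Y v (wb, dpdgc_Z A (fst wb) (snd wb) N)) \<in> (borel :: (real^'h^'n) measure) \<rightarrow>\<^sub>M subprob_algebra (MY \<Otimes>\<^sub>M (borel \<Otimes>\<^sub>M MT))"
      by (rule measurable_compose[OF m measurable_prob_algebraD[OF KK_meas[OF B_kernel g_meas]]])
    show ?thesis unfolding gauss_PiN
      by (rule bind_distr[OF toM_meas k]) (simp add: PN.not_empty)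
  qed
  then show ?thesis
    unfolding dpdgc_mech_def by (simp add: Let_def KK_def)
qed

lemma renyi_int_pos:
  assumes P: "prob_space P" and Q: "prob_space Q" and sPQ: "sets P = sets Q" and ac: "absolutely_continuous Q P"
  shows "(\<integral>\<^sup>+ x. ennreal (enn2real (RN_deriv Q P x) powr \<alpha>) \<partial>Q) \<noteq> 0"
proof
  interpret P: prob_space P by fact
  interpret Q: prob_space Q by fact
  assume "(\<integral>\<^sup>+ x. ennreal (enn2real (RN_deriv Q P x) powr \<alpha>) \<partial>Q) = 0"
  then have "AE x in Q. ennreal (enn2real (RN_deriv Q P x) powr \<alpha>) = 0"
    by (subst (asm) nn_integral_0_iff_AE) auto
  moreover have "AE x in Q. RN_deriv Q P x \<noteq> \<infinity>"
    by (rule Q.RN_deriv_finite[OF _ ac sPQ]) (simp add: P.sigma_finite_measure)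
  ultimately have "AE x in Q. RN_deriv Q P x = 0"
    by eventually_elim (auto simp: enn2real_eq_0_iff)
  then have "(\<integral>\<^sup>+ x. RN_deriv Q P x \<partial>Q) = 0"
    by (subst nn_integral_0_iff_AE) auto
  moreover have "emeasure P (space P) = (\<integral>\<^sup>+ x. RN_deriv Q P x \<partial>Q)"
  proof -
    have "P = density Q (RN_deriv Q P)" using Q.density_RN_deriv[OF ac sPQ] by simp
    then have "emeasure P (space P) = emeasure (density Q (RN_deriv Q P)) (space Q)"
      using sets_eq_imp_space_eq[OF sPQ] by simp
    also have "\<dots> = (\<integral>\<^sup>+ x. RN_deriv Q P x \<partial>Q)"
      by (subst emeasure_density) auto
    finally show ?thesis .
  qed
  ultimately show False using P.emeasure_space_1 by simp
qed

lemma LA_meas: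
  fixes B :: "real^'f::finite^'n::finite \<Rightarrow> ('n \<Rightarrow> 'c::finite \<Rightarrow> bool) \<Rightarrow> real^'h::finite^'n \<Rightarrow> 'th measure"
    and g :: "'th \<Rightarrow> real^'f \<Rightarrow> real^'h \<Rightarrow> 'y"
  assumes B_kernel: "\<And>X Y. B X Y \<in> borel \<rightarrow>\<^sub>M prob_algebra MT"
    and g_meas: "(\<lambda>(\<theta>, x, z). g \<theta> x z) \<in> MT \<Otimes>\<^sub>M borel \<Otimes>\<^sub>M borel \<rightarrow>\<^sub>M MY"
  shows "(\<lambda>x. KK B g MT MY X Y v (fst x, dpdgc_Z A0 (fst (fst x)) (snd (fst x)) (toM (snd x))))
     \<in> ((borel :: ((real^'h^'n) \<times> (real^'h)) measure) \<Otimes>\<^sub>M (PiN s :: ('n \<times> 'h \<Rightarrow> real) measure)) \<rightarrow>\<^sub>M prob_algebra (MY \<Otimes>\<^sub>M (borel \<Otimes>\<^sub>M MT))"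
proof -
  have z: "(\<lambda>x. dpdgc_Z A0 (fst (fst x)) (snd (fst x)) (toM (snd x)))
     \<in> ((borel :: ((real^'h^'n) \<times> (real^'h)) measure) \<Otimes>\<^sub>M (PiN s :: ('n \<times> 'h \<Rightarrow> real) measure)) \<rightarrow>\<^sub>M borel"
    using dpdgc_Z_meas[of A0 s] by (simp add: case_prod_unfold)
  have "(\<lambda>x. (fst x, dpdgc_Z A0 (fst (fst x)) (snd (fst x)) (toM (snd x))))
     \<in> ((borel :: ((real^'h^'n) \<times> (real^'h)) measure) \<Otimes>\<^sub>M (PiN s :: ('n \<times> 'h \<Rightarrow> real) measure)) \<rightarrow>\<^sub>M borel \<Otimes>\<^sub>M borel"
    by (rule measurable_Pair[OF measurable_fst z])
  from measurable_compose[OF this KK_meas[where B=B and X=X and Y=Y and v=v, OF B_kernel g_meas]] show ?thesis by simp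
qed

theorem corollaryH1:
  fixes \<alpha> s \<gamma>\<^sub>1 :: real
    and Lab :: "'n::finite set"
    and Wd :: "('n, 'f::finite, 'c::finite) dataset \<Rightarrow> ((real^'h::finite^'n) \<times> (real^'h)) measure"
    and B :: "real^'f^'n \<Rightarrow> ('n \<Rightarrow> 'c \<Rightarrow> bool) \<Rightarrow> real^'h^'n \<Rightarrow> 'th measure"
    and g :: "'th \<Rightarrow> real^'f \<Rightarrow> real^'h \<Rightarrow> 'y"
    and MT :: "'th measure" and MY :: "'y measure"
  assumes "\<alpha> > 1" and "s > 0"
    and Wd_prob: "\<And>D. valid_dataset Lab D \<Longrightarrow> Wd D \<in> space (prob_algebra borel)"
    and Wd_rows: "\<And>D. valid_dataset Lab D \<Longrightarrow> AE wb in Wd D. \<forall>i. norm (fst wb $ i) = 1"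
    and B_kernel: "\<And>X Y. B X Y \<in> borel \<rightarrow>\<^sub>M prob_algebra MT"
    and g_meas: "(\<lambda>(\<theta>, x, z). g \<theta> x z) \<in> MT \<Otimes>\<^sub>M borel \<Otimes>\<^sub>M borel \<rightarrow>\<^sub>M MY"
    and weights_rdp: "\<And>D D'. edge_adjacent Lab D D' \<Longrightarrow> renyi_div \<alpha> (Wd D) (Wd D') \<le> ereal \<gamma>\<^sub>1"
  shows "\<forall>v D D'. v \<notin> Lab \<longrightarrow> edge_adjacent Lab D D' \<longrightarrow>
           renyi_div \<alpha> (dpdgc_mech s Wd B g MT MY v D) (dpdgc_mech s Wd B g MT MY v D')
             \<le> ereal (\<gamma>\<^sub>1 + \<alpha> / (2 * s\<^sup>2))"
proof (intro allI impI)
  note a1 = \<open>\<alpha> > 1\<close> and s = \<open>s > 0\<close>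
  fix v and D D' :: "('n, 'f, 'c) dataset" assume v: "v \<notin> Lab" and adj: "edge_adjacent Lab D D'"
  obtain X Y A where D: "D = (X, Y, A)" by (cases D) auto
  obtain X' Y' A' where D': "D' = (X', Y', A')" by (cases D') auto
  from adj have vD: "valid_dataset Lab D" and vD': "valid_dataset Lab D'"
    and XX: "X' = X" "Y' = Y" and card: "card {(i, j). A i j \<noteq> A' i j} = 1"
    unfolding edge_adjacent_def D D' by auto
  obtain i0 j0 where diffset: "{(i, j). A i j \<noteq> A' i j} = {(i0, j0)}"
    using card by (metis card_1_singletonE surj_pair)
  have dif: "A i0 j0 \<noteq> A' i0 j0" using diffset by auto
  have same: "\<And>i j. (i, j) \<noteq> (i0, j0) \<Longrightarrow> A i j = A' i j" using diffset by auto
  define WP where "WP = Wd D"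
  define WQ where "WQ = Wd D'"
  have WPa: "WP \<in> space (prob_algebra borel)" unfolding WP_def by (rule Wd_prob[OF vD])
  have WQa: "WQ \<in> space (prob_algebra borel)" unfolding WQ_def by (rule Wd_prob[OF vD'])
  interpret WP: prob_space WP using WPa by (simp add: space_prob_algebra)
  interpret WQ: prob_space WQ using WQa by (simp add: space_prob_algebra)
  have sWP: "sets WP = sets borel" using WPa by (simp add: space_prob_algebra)
  have sWQ: "sets WQ = sets borel" using WQa by (simp add: space_prob_algebra)
  interpret PN: prob_space "PiN s :: ('n \<times> 'h \<Rightarrow> real) measure" by (rule prob_space_PiN[OF s])
  have rdp: "renyi_div \<alpha> WP WQ \<le> ereal \<gamma>\<^sub>1" unfolding WP_def WQ_def by (rule weights_rdp[OF adj])
  define IW where "IW = (\<integral>\<^sup>+ x. ennreal (enn2real (RN_deriv WQ WP x) powr \<alpha>) \<partial>WQ)"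
  have acW: "absolutely_continuous WQ WP"
  proof (rule ccontr)
    assume "\<not> absolutely_continuous WQ WP"
    then have "renyi_div \<alpha> WP WQ = \<infinity>" unfolding renyi_div_def by auto
    with rdp show False by simp
  qed
  have IWfin: "IW \<noteq> \<top>" and IWb: "ln (enn2real IW) / (\<alpha> - 1) \<le> \<gamma>\<^sub>1"
  proof -
    have r: "renyi_div \<alpha> WP WQ = (if IW = \<top> then \<infinity> else ereal (ln (enn2real IW) / (\<alpha> - 1)))"
      unfolding renyi_div_def IW_def using acW sWP sWQ by (simp add: Let_def)
    show "IW \<noteq> \<top>" using rdp r by (cases "IW = \<top>") auto
    then show "ln (enn2real IW) / (\<alpha> - 1) \<le> \<gamma>\<^sub>1" using rdp r by simp
  qed
  define hW where "hW x = enn2real (RN_deriv WQ WP x)" for x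
  have hWm[measurable]: "hW \<in> borel_measurable WQ" unfolding hW_def by measurable
  have hW0: "\<And>x. 0 \<le> hW x" unfolding hW_def by simp
  have WPd: "WP = density WQ (\<lambda>x. ennreal (hW x))"
  proof -
    have fin: "AE y in WQ. RN_deriv WQ WP y \<noteq> \<infinity>"
      by (rule WQ.RN_deriv_finite[OF _ acW]) (auto simp: sWP sWQ WP.sigma_finite_measure)
    have "WP = density WQ (RN_deriv WQ WP)"
      using WQ.density_RN_deriv[OF acW] sWP sWQ by simp
    also have "\<dots> = density WQ (\<lambda>y. ennreal (hW y))"
      by (rule density_cong) (use fin in \<open>auto simp: hW_def ennreal_enn2real_if\<close>)
    finally show ?thesis .
  qed
  define Out where "Out = MY \<Otimes>\<^sub>M ((borel :: ((real^'h^'n) \<times> (real^'h)) measure) \<Otimes>\<^sub>M MT)"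
  define KKv where "KKv = KK B g MT MY X Y v"
  define ZZ where "ZZ A0 x = dpdgc_Z A0 (fst (fst x)) (snd (fst x)) (toM (snd x))" for A0 and x :: "((real^'h^'n) \<times> (real^'h)) \<times> ('n \<times> 'h \<Rightarrow> real)"
  define LL where "LL A0 x = KKv (fst x, ZZ A0 x)" for A0 x
  have LLm: "LL A0 \<in> ((borel :: ((real^'h^'n) \<times> (real^'h)) measure) \<Otimes>\<^sub>M (PiN s :: ('n \<times> 'h \<Rightarrow> real) measure)) \<rightarrow>\<^sub>M prob_algebra Out" for A0
    unfolding LL_def KKv_def ZZ_def Out_def by (rule LA_meas[OF B_kernel g_meas])
  define M0 where "M0 = WQ \<Otimes>\<^sub>M (PiN s :: ('n \<times> 'h \<Rightarrow> real) measure)"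
  have sM0: "sets M0 = sets ((borel :: ((real^'h^'n) \<times> (real^'h)) measure) \<Otimes>\<^sub>M (PiN s :: ('n \<times> 'h \<Rightarrow> real) measure))"
    unfolding M0_def by (rule sets_pair_measure_cong[OF sWQ refl])
  have sWPM: "sets (WP \<Otimes>\<^sub>M (PiN s :: ('n \<times> 'h \<Rightarrow> real) measure)) = sets ((borel :: ((real^'h^'n) \<times> (real^'h)) measure) \<Otimes>\<^sub>M (PiN s :: ('n \<times> 'h \<Rightarrow> real) measure))"
    by (rule sets_pair_measure_cong[OF sWP refl])
  have LLm0: "LL A0 \<in> M0 \<rightarrow>\<^sub>M prob_algebra Out" for A0
    using LLm[of A0] by (subst measurable_cong_sets[OF sM0 refl])
  have LLmP: "LL A0 \<in> WP \<Otimes>\<^sub>M (PiN s :: ('n \<times> 'h \<Rightarrow> real) measure) \<rightarrow>\<^sub>M prob_algebra Out" for A0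
    using LLm[of A0] by (subst measurable_cong_sets[OF sWPM refl])
  have LLs0: "LL A0 \<in> M0 \<rightarrow>\<^sub>M subprob_algebra Out" for A0
    by (rule measurable_prob_algebraD[OF LLm0])
  have LLsP: "LL A0 \<in> WP \<Otimes>\<^sub>M (PiN s :: ('n \<times> 'h \<Rightarrow> real) measure) \<rightarrow>\<^sub>M subprob_algebra Out" for A0
    by (rule measurable_prob_algebraD[OF LLmP])
  have mechD: "dpdgc_mech s Wd B g MT MY v D = WP \<bind> (\<lambda>wb. PiN s \<bind> (\<lambda>y. LL A (wb, y)))"
    unfolding WP_def D LL_def KKv_def ZZ_def by (simp add: mech_eq[OF B_kernel g_meas s])
  have mechD': "dpdgc_mech s Wd B g MT MY v D' = WQ \<bind> (\<lambda>wb. PiN s \<bind> (\<lambda>y. LL A' (wb, y)))"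
    unfolding WQ_def D' XX LL_def KKv_def ZZ_def by (simp add: mech_eq[OF B_kernel g_meas s])
  define c where "c wb = cc A A' i0 j0 (fst wb)" for wb :: "(real^'h^'n) \<times> (real^'h)"
  define f0 where "f0 x = hW (fst x) * rho s (c (fst x)) (snd x)" for x :: "((real^'h^'n) \<times> (real^'h)) \<times> ('n \<times> 'h \<Rightarrow> real)"
  have sM0': "sets M0 = sets (((borel :: (real^'h^'n) measure) \<Otimes>\<^sub>M (borel :: (real^'h) measure)) \<Otimes>\<^sub>M PiM UNIV (\<lambda>_::'n \<times> 'h. (borel :: real measure)))"
    unfolding M0_def by (rule sets_pair_measure_cong[OF _ sets_PiN]) (subst borel_prod, simp add: sWQ)
  have rhom: "(\<lambda>x. rho s (c (fst x)) (snd x)) \<in> borel_measurable M0"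
    unfolding measurable_cong_sets[OF sM0' refl] c_def cc_def by measurable
  have hWm0: "(\<lambda>x. hW (fst x)) \<in> borel_measurable M0"
    unfolding M0_def by measurable
  have f0m: "f0 \<in> borel_measurable M0" unfolding f0_def using rhom hWm0 by measurable
  have f00: "\<And>x. 0 \<le> f0 x" unfolding f0_def by (intro mult_nonneg_nonneg hW0 less_imp_le[OF rho_pos])
  have kQ: "(\<lambda>wb. PiN s \<bind> (\<lambda>y. LL A0 (wb, y))) \<in> WQ \<rightarrow>\<^sub>M prob_algebra Out" for A0
  proof (rule measurable_bind_prob_space2)
    show "(\<lambda>wb. PiN s) \<in> WQ \<rightarrow>\<^sub>M prob_algebra (PiN s :: ('n \<times> 'h \<Rightarrow> real) measure)"
      by (rule measurable_const) (simp add: space_prob_algebra PN.prob_space_axioms)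
    show "(\<lambda>(x, y). LL A0 (x, y)) \<in> WQ \<Otimes>\<^sub>M PiN s \<rightarrow>\<^sub>M prob_algebra Out"
      using LLm0[of A0] by (simp add: M0_def case_prod_unfold)
  qed
  have kP: "(\<lambda>wb. PiN s \<bind> (\<lambda>y. LL A0 (wb, y))) \<in> WP \<rightarrow>\<^sub>M prob_algebra Out" for A0
  proof (rule measurable_bind_prob_space2)
    show "(\<lambda>wb. PiN s) \<in> WP \<rightarrow>\<^sub>M prob_algebra (PiN s :: ('n \<times> 'h \<Rightarrow> real) measure)"
      by (rule measurable_const) (simp add: space_prob_algebra PN.prob_space_axioms)
    show "(\<lambda>(x, y). LL A0 (x, y)) \<in> WP \<Otimes>\<^sub>M PiN s \<rightarrow>\<^sub>M prob_algebra Out"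
      using LLmP[of A0] by (simp add: case_prod_unfold)
  qed
  have inner: "emeasure (PiN s \<bind> (\<lambda>y. LL A0 (wb, y))) E = (\<integral>\<^sup>+ y. emeasure (LL A0 (wb, y)) E \<partial>PiN s)"
    if wb: "wb \<in> space WQ" and E: "E \<in> sets Out" for A0 wb E
  proof -
    have "(\<lambda>y. (wb, y)) \<in> PiN s \<rightarrow>\<^sub>M M0"
      unfolding M0_def by (rule measurable_Pair) (auto simp: wb)
    from measurable_compose[OF this LLs0[of A0]]
    have "(\<lambda>y. LL A0 (wb, y)) \<in> PiN s \<rightarrow>\<^sub>M subprob_algebra Out" .
    then show ?thesis by (rule emeasure_bind[OF PN.not_empty _ E])
  qed
  have emLL: "(\<lambda>x. emeasure (LL A0 x) E) \<in> borel_measurable M0" if E: "E \<in> sets Out" for A0 E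
    by (rule measurable_emeasure_kernel[OF LLs0 E])
  have sOutQ: "sets (WQ \<bind> (\<lambda>wb. PiN s \<bind> (\<lambda>y. LL A' (wb, y)))) = sets Out"
    by (rule sets_bind_measurable[OF measurable_prob_algebraD[OF kQ]]) (simp add: WQ.not_empty)
  have sOutP: "sets (WP \<bind> (\<lambda>wb. PiN s \<bind> (\<lambda>y. LL A (wb, y)))) = sets Out"
    by (rule sets_bind_measurable[OF measurable_prob_algebraD[OF kP]]) (simp add: WP.not_empty)
  have sOutM0: "sets (M0 \<bind> LL A') = sets Out"
    by (rule sets_bind_measurable[OF LLs0]) (simp add: M0_def space_pair_measure WQ.not_empty PN.not_empty)
  have LLsd: "LL A' \<in> density M0 (\<lambda>x. ennreal (f0 x)) \<rightarrow>\<^sub>M subprob_algebra Out"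
    using LLs0[of A'] by (simp cong: measurable_cong_sets)
  have sOutD: "sets (density M0 (\<lambda>x. ennreal (f0 x)) \<bind> LL A') = sets Out"
    by (rule sets_bind_measurable[OF LLsd]) (simp add: M0_def space_pair_measure WQ.not_empty PN.not_empty)
  have Qeq: "dpdgc_mech s Wd B g MT MY v D' = M0 \<bind> LL A'"
    unfolding mechD'
  proof (rule measure_eqI)
    show "sets (WQ \<bind> (\<lambda>wb. PiN s \<bind> (\<lambda>y. LL A' (wb, y)))) = sets (M0 \<bind> LL A')"
      using sOutQ sOutM0 by simp
    fix E assume "E \<in> sets (WQ \<bind> (\<lambda>wb. PiN s \<bind> (\<lambda>y. LL A' (wb, y))))"
    then have E: "E \<in> sets Out" using sOutQ by simp
    have "emeasure (WQ \<bind> (\<lambda>wb. PiN s \<bind> (\<lambda>y. LL A' (wb, y)))) E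
        = (\<integral>\<^sup>+ wb. emeasure (PiN s \<bind> (\<lambda>y. LL A' (wb, y))) E \<partial>WQ)"
      by (rule emeasure_bind[OF WQ.not_empty measurable_prob_algebraD[OF kQ] E])
    also have "\<dots> = (\<integral>\<^sup>+ wb. \<integral>\<^sup>+ y. emeasure (LL A' (wb, y)) E \<partial>PiN s \<partial>WQ)"
      by (intro nn_integral_cong inner E)
    also have "\<dots> = (\<integral>\<^sup>+ x. emeasure (LL A' x) E \<partial>M0)"
      unfolding M0_def by (rule PN.nn_integral_fst) (use emLL[OF E] in \<open>simp add: M0_def\<close>)
    also have "\<dots> = emeasure (M0 \<bind> LL A') E"
      by (rule emeasure_bind[OF _ LLs0 E, symmetric]) (simp add: M0_def space_pair_measure WQ.not_empty PN.not_empty)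
    finally show "emeasure (WQ \<bind> (\<lambda>wb. PiN s \<bind> (\<lambda>y. LL A' (wb, y)))) E = emeasure (M0 \<bind> LL A') E" .
  qed
  have zs: "\<And>W b y. dpdgc_Z A W b (toM y) = dpdgc_Z A' W b (toM (\<lambda>p. y p + cc A A' i0 j0 W p))"
    by (rule Zshift, rule same)
  have Peq: "dpdgc_mech s Wd B g MT MY v D = density M0 (\<lambda>x. ennreal (f0 x)) \<bind> LL A'"
    unfolding mechD
  proof (rule measure_eqI)
    show "sets (WP \<bind> (\<lambda>wb. PiN s \<bind> (\<lambda>y. LL A (wb, y)))) = sets (density M0 (\<lambda>x. ennreal (f0 x)) \<bind> LL A')"
      using sOutP sOutD by simp
    fix E assume "E \<in> sets (WP \<bind> (\<lambda>wb. PiN s \<bind> (\<lambda>y. LL A (wb, y))))"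
    then have E: "E \<in> sets Out" using sOutP by simp
    have spWP: "space WP = space WQ" using sWP sWQ by (metis sets_eq_imp_space_eq)
    have G: "(\<lambda>x. ennreal (rho s (c (fst x)) (snd x)) * emeasure (LL A' x) E) \<in> borel_measurable M0"
      using rhom emLL[OF E] by measurable
    have "emeasure (WP \<bind> (\<lambda>wb. PiN s \<bind> (\<lambda>y. LL A (wb, y)))) E
        = (\<integral>\<^sup>+ wb. emeasure (PiN s \<bind> (\<lambda>y. LL A (wb, y))) E \<partial>WP)"
      by (rule emeasure_bind[OF WP.not_empty measurable_prob_algebraD[OF kP] E])
    also have "\<dots> = (\<integral>\<^sup>+ wb. \<integral>\<^sup>+ y. emeasure (LL A (wb, y)) E \<partial>PiN s \<partial>WP)"
      by (intro nn_integral_cong inner E) (simp add: spWP)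
    also have "\<dots> = (\<integral>\<^sup>+ wb. \<integral>\<^sup>+ y. emeasure (LL A' (wb, (\<lambda>p. y p + c wb p))) E \<partial>PiN s \<partial>WP)"
      unfolding LL_def ZZ_def c_def
      by (intro nn_integral_cong) (simp add: zs)
    also have "\<dots> = (\<integral>\<^sup>+ wb. \<integral>\<^sup>+ y. ennreal (rho s (c wb) y) * emeasure (LL A' (wb, y)) E \<partial>PiN s \<partial>WP)"
    proof (rule nn_integral_cong)
      fix wb assume wb: "wb \<in> space WP"
      have "(\<lambda>y. (wb, y)) \<in> PiN s \<rightarrow>\<^sub>M M0"
        unfolding M0_def by (rule measurable_Pair) (auto simp: wb spWP[symmetric])
      from measurable_compose[OF this emLL[OF E]]
      have "(\<lambda>y. emeasure (LL A' (wb, y)) E) \<in> borel_measurable (PiN s)" .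
      then show "(\<integral>\<^sup>+ y. emeasure (LL A' (wb, (\<lambda>p. y p + c wb p))) E \<partial>PiN s)
          = (\<integral>\<^sup>+ y. ennreal (rho s (c wb) y) * emeasure (LL A' (wb, y)) E \<partial>PiN s)"
        by (rule shiftP[OF s, where F="\<lambda>y. emeasure (LL A' (wb, y)) E"])
    qed
    also have "\<dots> = (\<integral>\<^sup>+ wb. ennreal (hW wb) * \<integral>\<^sup>+ y. ennreal (rho s (c wb) y) * emeasure (LL A' (wb, y)) E \<partial>PiN s \<partial>WQ)"
      unfolding WPd
      by (rule nn_integral_density) (use PN.borel_measurable_nn_integral_fst[OF G[unfolded M0_def]] in simp_all)
    also have "\<dots> = (\<integral>\<^sup>+ wb. \<integral>\<^sup>+ y. ennreal (f0 (wb, y)) * emeasure (LL A' (wb, y)) E \<partial>PiN s \<partial>WQ)"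
    proof (rule nn_integral_cong)
      fix wb assume wb: "wb \<in> space WQ"
      have "(\<lambda>y. (wb, y)) \<in> PiN s \<rightarrow>\<^sub>M M0"
        unfolding M0_def by (rule measurable_Pair) (auto simp: wb)
      from measurable_compose[OF this G]
      have "(\<lambda>y. ennreal (rho s (c wb) y) * emeasure (LL A' (wb, y)) E) \<in> borel_measurable (PiN s)" by simp
      then show "ennreal (hW wb) * (\<integral>\<^sup>+ y. ennreal (rho s (c wb) y) * emeasure (LL A' (wb, y)) E \<partial>PiN s)
          = (\<integral>\<^sup>+ y. ennreal (f0 (wb, y)) * emeasure (LL A' (wb, y)) E \<partial>PiN s)"
        by (subst nn_integral_cmult[symmetric])
           (auto simp: f0_def ennreal_mult[OF hW0 less_imp_le[OF rho_pos]] mult.assoc)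
    qed
    also have "\<dots> = (\<integral>\<^sup>+ x. ennreal (f0 x) * emeasure (LL A' x) E \<partial>M0)"
      unfolding M0_def by (rule PN.nn_integral_fst) (use f0m emLL[OF E] in \<open>simp add: M0_def\<close>)
    also have "\<dots> = (\<integral>\<^sup>+ x. emeasure (LL A' x) E \<partial>density M0 (\<lambda>x. ennreal (f0 x)))"
      by (rule nn_integral_density[symmetric]) (use f0m emLL[OF E] in auto)
    also have "\<dots> = emeasure (density M0 (\<lambda>x. ennreal (f0 x)) \<bind> LL A') E"
      by (rule emeasure_bind[OF _ LLsd E, symmetric]) (simp add: M0_def space_pair_measure WQ.not_empty PN.not_empty)
    finally show "emeasure (WP \<bind> (\<lambda>wb. PiN s \<bind> (\<lambda>y. LL A (wb, y)))) E = emeasure (density M0 (\<lambda>x. ennreal (f0 x)) \<bind> LL A') E" .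
  qed
  define P where "P = dpdgc_mech s Wd B g MT MY v D"
  define Q where "Q = dpdgc_mech s Wd B g MT MY v D'"
  interpret M0p: pair_prob_space WQ "PiN s :: ('n \<times> 'h \<Rightarrow> real) measure" ..
  have M0prob: "prob_space M0" unfolding M0_def by (rule M0p.prob_space_axioms)
  have Pprob: "prob_space P" unfolding P_def mechD
    by (rule prob_space_bind'[OF _ kP]) (simp add: space_prob_algebra WP.prob_space_axioms)
  have Qprob: "prob_space Q" unfolding Q_def mechD'
    by (rule prob_space_bind'[OF _ kQ]) (simp add: space_prob_algebra WQ.prob_space_axioms)
  have Pprob': "prob_space (density M0 (\<lambda>x. ennreal (f0 x)) \<bind> LL A')" using Pprob Peq P_def by simp
  note dp = dpi[OF a1 M0prob LLm0 f0m f00 Pprob']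
  have sPQ: "sets P = sets Q" using dp(1) Peq Qeq P_def Q_def by simp
  have acPQ: "absolutely_continuous Q P" using dp(2) Peq Qeq P_def Q_def by simp
  define Iout where "Iout = (\<integral>\<^sup>+ x. ennreal (enn2real (RN_deriv Q P x) powr \<alpha>) \<partial>Q)"
  have Ile: "Iout \<le> (\<integral>\<^sup>+ x. ennreal (f0 x powr \<alpha>) \<partial>M0)"
    using dp(3) Peq Qeq P_def Q_def Iout_def by simp
  define Ee where "Ee = exp (\<alpha> * (\<alpha> - 1) / (2 * s\<^sup>2))"
  have rows: "AE wb in WQ. (\<Sum>p\<in>UNIV. (c wb p)\<^sup>2) = 1"
  proof -
    have "AE wb in WQ. \<forall>i. norm (fst wb $ i) = 1" unfolding WQ_def by (rule Wd_rows[OF vD'])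
    then show ?thesis
    proof (rule AE_mp, intro AE_I2 impI)
      fix wb :: "(real^'h^'n) \<times> (real^'h)" assume "\<forall>i. norm (fst wb $ i) = 1"
      then have "norm (fst wb $ j0) = 1" by simp
      then show "(\<Sum>p\<in>UNIV. (c wb p)\<^sup>2) = 1"
        unfolding c_def cc_sum[of A i0 j0 A', OF dif] by (rule norm1_sum)
    qed
  qed
  have Fval: "(\<integral>\<^sup>+ x. ennreal (f0 x powr \<alpha>) \<partial>M0) = ennreal Ee * IW"
  proof -
    have m: "(\<lambda>x. ennreal (f0 x powr \<alpha>)) \<in> borel_measurable M0" using f0m by measurable
    have "(\<integral>\<^sup>+ x. ennreal (f0 x powr \<alpha>) \<partial>M0) = (\<integral>\<^sup>+ wb. \<integral>\<^sup>+ y. ennreal (f0 (wb, y) powr \<alpha>) \<partial>PiN s \<partial>WQ)"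
      unfolding M0_def by (rule PN.nn_integral_fst[symmetric]) (use m in \<open>simp add: M0_def\<close>)
    also have "\<dots> = (\<integral>\<^sup>+ wb. ennreal (hW wb powr \<alpha>) * \<integral>\<^sup>+ y. ennreal (rho s (c wb) y powr \<alpha>) \<partial>PiN s \<partial>WQ)"
    proof (rule nn_integral_cong)
      fix wb assume wb: "wb \<in> space WQ"
      have "(\<lambda>y. (wb, y)) \<in> PiN s \<rightarrow>\<^sub>M M0"
        unfolding M0_def by (rule measurable_Pair) (auto simp: wb)
      from measurable_compose[OF this rhom]
      have "(\<lambda>y. rho s (c wb) y) \<in> borel_measurable (PiN s)" by simp
      then have "(\<lambda>y. ennreal (rho s (c wb) y powr \<alpha>)) \<in> borel_measurable (PiN s)" by measurable
      then show "(\<integral>\<^sup>+ y. ennreal (f0 (wb, y) powr \<alpha>) \<partial>PiN s) = ennreal (hW wb powr \<alpha>) * \<integral>\<^sup>+ y. ennreal (rho s (c wb) y powr \<alpha>) \<partial>PiN s"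
        by (subst nn_integral_cmult[symmetric])
           (auto simp: f0_def powr_mult hW0 less_imp_le[OF rho_pos] ennreal_mult intro!: nn_integral_cong)
    qed
    also have "\<dots> = (\<integral>\<^sup>+ wb. ennreal (hW wb powr \<alpha>) * ennreal Ee \<partial>WQ)"
    proof (rule nn_integral_cong_AE)
      show "AE wb in WQ. ennreal (hW wb powr \<alpha>) * (\<integral>\<^sup>+ y. ennreal (rho s (c wb) y powr \<alpha>) \<partial>PiN s) = ennreal (hW wb powr \<alpha>) * ennreal Ee"
        using rows by eventually_elim (simp add: rho_moment[OF s] Ee_def)
    qed
    also have "\<dots> = ennreal Ee * IW"
      unfolding IW_def hW_def by (subst nn_integral_cmult[symmetric]) (auto simp: mult.commute)
    finally show ?thesis .
  qed
  have Ee_pos: "Ee > 0" unfolding Ee_def by simp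
  have Iout_le: "Iout \<le> ennreal Ee * IW" using Ile Fval by simp
  have Iout_fin: "Iout \<noteq> \<top>"
  proof -
    have "ennreal Ee * IW \<noteq> \<top>" using IWfin by (simp add: ennreal_mult_eq_top_iff)
    then show ?thesis using Iout_le by (metis neq_top_trans)
  qed
  have Iout_pos: "Iout \<noteq> 0" unfolding Iout_def by (rule renyi_int_pos[OF Pprob Qprob sPQ acPQ])
  have r1: "enn2real Iout \<le> Ee * enn2real IW"
  proof -
    have "enn2real Iout \<le> enn2real (ennreal Ee * IW)"
    proof (rule enn2real_mono[OF Iout_le])
      have "ennreal Ee * IW \<noteq> \<top>" using IWfin by (simp add: ennreal_mult_eq_top_iff)
      then show "ennreal Ee * IW < \<top>" by (simp add: less_top)
    qed
    also have "\<dots> = Ee * enn2real IW" using Ee_pos by (simp add: enn2real_mult)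
    finally show ?thesis .
  qed
  have Ipos: "enn2real Iout > 0"
    using Iout_pos Iout_fin by (simp add: enn2real_positive_iff less_top zero_less_iff_neq_zero)
  have IWpos: "enn2real IW > 0"
  proof (rule ccontr)
    assume "\<not> enn2real IW > 0"
    then have "enn2real IW \<le> 0" by simp
    with r1 Ee_pos have "enn2real Iout \<le> 0" by (metis mult_nonpos_nonneg order_trans less_imp_le mult.commute)
    with Ipos show False by simp
  qed
  have "ln (enn2real Iout) \<le> ln (Ee * enn2real IW)"
    using r1 Ipos by simp
  also have "\<dots> = \<alpha> * (\<alpha> - 1) / (2 * s\<^sup>2) + ln (enn2real IW)"
    using Ee_pos IWpos by (simp add: ln_mult Ee_def)
  finally have lnle: "ln (enn2real Iout) \<le> \<alpha> * (\<alpha> - 1) / (2 * s\<^sup>2) + ln (enn2real IW)" .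
  have "ln (enn2real Iout) / (\<alpha> - 1) \<le> (\<alpha> * (\<alpha> - 1) / (2 * s\<^sup>2) + ln (enn2real IW)) / (\<alpha> - 1)"
    using lnle a1 by (intro divide_right_mono) auto
  also have "\<dots> = \<alpha> / (2 * s\<^sup>2) + ln (enn2real IW) / (\<alpha> - 1)"
    using a1 by (simp add: add_divide_distrib)
  also have "\<dots> \<le> \<alpha> / (2 * s\<^sup>2) + \<gamma>\<^sub>1" using IWb by simp
  finally have fin: "ln (enn2real Iout) / (\<alpha> - 1) \<le> \<gamma>\<^sub>1 + \<alpha> / (2 * s\<^sup>2)" by simp
  have "renyi_div \<alpha> P Q = ereal (ln (enn2real Iout) / (\<alpha> - 1))"
    unfolding renyi_div_def Iout_def[symmetric] using sPQ acPQ Iout_fin by (simp add: Let_def)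
  then show "renyi_div \<alpha> (dpdgc_mech s Wd B g MT MY v D) (dpdgc_mech s Wd B g MT MY v D') \<le> ereal (\<gamma>\<^sub>1 + \<alpha> / (2 * s\<^sup>2))"
    using fin unfolding P_def Q_def by simp
qed


end
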